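(* Let $\mu$ be a distribution on $\{0,1\}^{\mathbb{N}}$, let $X=(X_i)_{i\in\mathbb{N}}\sim\mu$ be defined on a probability space $(\Omega,\mathcal{F},\mathbb{P})$, and suppose $(\mathbb{N},\xi)$ is totally bounded. Suppose there exists $K\ge1$ such that for every $\varepsilon>0$ there exist events $(E_k)_{k\in\mathbb{N}}$ in $\mathcal{F}$ and a finite sequence of random variables $(Z_j)_{j\in[J]}$ defined on $(\Omega,\mathcal{F},\mathbb{P})$ with: (1) $\mathbb{P}(E_k)\le\varepsilon$ for all $k\in\mathbb{N}$; (2) $\sup_{k\in\mathbb{N}}\frac{\log(k+1)}{\log(1/\mathbb{P}(E_k))}<\infty$; (3) for every $i\in\mathbb{N}$ there exist $j\in[J]$ and $\mathcal{K}\subset\mathbb{N}$ with $|\mathcal{K}|\le K$ and $\{X_i\neq Z_j\}\subset\bigcup_{k\in\mathcal{K}}E_k$. Then $\Delta_n(\mu)\to0$ as $n\to\infty$.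
   Context: $\xi(i,j):=\mathbb{P}(X_i\neq X_j)$; $(\mathbb{N},\xi)$ is totally bounded if for every $\varepsilon>0$ there is a finite $S\subset\mathbb{N}$ such that every $i$ has $s\in S$ with $\xi(i,s)\le\varepsilon$. $[J]=\{1,\dots,J\}$. For $n\ge1$, with $X^{(1)},\dots,X^{(n)}$ i.i.d. from $\mu$, $\Delta_n(\mu):=\mathbb{E}\sup_{j\in\mathbb{N}}\left|\frac1n\sum_{i=1}^nX^{(i)}_j-\mathbb{E}[X_j]\right|$. In (2), $\log(1/0)=\infty$. *)

theory Defs
  imports "HOL-Probability.Probability"
begin

abbreviation seq_space :: "(nat \<Rightarrow> bool) measure" where
  "seq_space \<equiv> PiM UNIV (\<lambda>_. count_space UNIV)"

definition xi :: "'a measure \<Rightarrow> ('a \<Rightarrow> nat \<Rightarrow> bool) \<Rightarrow> nat \<Rightarrow> nat \<Rightarrow> real" where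
  "xi M X i j = measure M {\<omega> \<in> space M. X \<omega> i \<noteq> X \<omega> j}"

definition xi_totally_bounded :: "'a measure \<Rightarrow> ('a \<Rightarrow> nat \<Rightarrow> bool) \<Rightarrow> bool" where
  "xi_totally_bounded M X \<longleftrightarrow>
     (\<forall>\<epsilon>>0. \<exists>S. finite S \<and> (\<forall>i. \<exists>s\<in>S. xi M X i s \<le> \<epsilon>))"

text \<open>Delta_n(mu) = E sup_j |(1/n) sum_{i=1}^n X^(i)_j - E[X_j]| with X^(1..n) iid mu
  (the n samples are indexed by {..<n}).\<close>
definition Delta :: "nat \<Rightarrow> (nat \<Rightarrow> bool) measure \<Rightarrow> real" where
  "Delta n \<mu> = integral\<^sup>L (PiM {..<n} (\<lambda>_. \<mu>))
     (\<lambda>\<omega>. SUP j. \<bar>(\<Sum>i<n. of_bool (\<omega> i j)) / real n - integral\<^sup>L \<mu> (\<lambda>x. of_bool (x j))\<bar>)"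

text \<open>The quantity log(k+1)/log(1/p) in extended reals, with log(1/0) = infinity
  (ratio 0) and log(1/1) = 0 (ratio infinity).\<close>
definition log_ratio :: "nat \<Rightarrow> real \<Rightarrow> ereal" where
  "log_ratio k p = (if p = 0 then 0 else if p = 1 then \<infinity>
                    else ereal (ln (real k + 1) / ln (1 / p)))"

end

theory Submission
  imports Defs
begin


lemma prod_integral_PiM:
  fixes f :: "nat \<Rightarrow> 'a \<Rightarrow> real"
  assumes "prob_space M" "\<And>m. m < n \<Longrightarrow> integrable M (f m)"
  shows "(\<integral>\<omega>. (\<Prod>m<n. f m (\<omega> m)) \<partial>PiM {..<n} (\<lambda>_. M)) = (\<Prod>m<n. integral\<^sup>L M (f m))"
proof -
  interpret prob_space M by fact
  interpret P: product_sigma_finite "\<lambda>_. M"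
    by (simp add: product_sigma_finite_def sigma_finite_measure_axioms)
  show ?thesis using assms by (intro P.product_integral_prod) auto
qed

lemma component_integral_PiM:
  fixes f :: "'a \<Rightarrow> real"
  assumes "prob_space M" "a < n" "f \<in> borel_measurable M"
  shows "(\<integral>\<omega>. f (\<omega> a) \<partial>PiM {..<n} (\<lambda>_. M)) = integral\<^sup>L M f"
proof -
  have "distr (PiM {..<n} (\<lambda>_. M)) M (\<lambda>\<omega>. \<omega> a) = M"
    using distr_PiM_component[of "{..<n}" "\<lambda>_. M" a] assms by auto
  then have "integral\<^sup>L M f = integral\<^sup>L (distr (PiM {..<n} (\<lambda>_. M)) M (\<lambda>\<omega>. \<omega> a)) f" by simp
  also have "\<dots> = (\<integral>\<omega>. f (\<omega> a) \<partial>PiM {..<n} (\<lambda>_. M))"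
    using assms by (subst integral_distr) auto
  finally show ?thesis by simp
qed



lemma comp_meas:
  assumes "f \<in> M \<rightarrow>\<^sub>M L" "a \<in> I"
  shows "(\<lambda>\<omega>. f (\<omega> a)) \<in> PiM I (\<lambda>_. M) \<rightarrow>\<^sub>M L"
  using measurable_compose[OF measurable_component_singleton[of a I "\<lambda>_. M"] assms(1)] assms(2) by simp

lemma mult_le1: "\<bar>x\<bar> \<le> 1 \<Longrightarrow> \<bar>y\<bar> \<le> 1 \<Longrightarrow> x * y \<le> (1::real)"
  by (metis abs_ge_self abs_ge_zero abs_mult mult_le_one order_trans)

lemma second_moment_PiM:
  fixes g :: "'a \<Rightarrow> real"
  assumes P: "prob_space M" and gm[measurable]: "g \<in> borel_measurable M"
    and gb: "\<And>w. w \<in> space M \<Longrightarrow> \<bar>g w\<bar> \<le> 1" and g0: "integral\<^sup>L M g = 0"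
  shows "(\<integral>\<omega>. (\<Sum>m<n. g (\<omega> m))^2 \<partial>PiM {..<n} (\<lambda>_. M)) \<le> real n"
proof -
  interpret prob_space M by fact
  define N where "N = PiM {..<n} (\<lambda>_. M)"
  interpret N: prob_space N unfolding N_def by (intro prob_space_PiM) (simp add: P)
  have sp: "\<omega> \<in> space N \<Longrightarrow> m < n \<Longrightarrow> \<omega> m \<in> space M" for \<omega> m
    unfolding N_def by (auto simp: space_PiM)
  have intg: "integrable N (\<lambda>\<omega>. g (\<omega> a) * g (\<omega> b))" if "a < n" "b < n" for a b
  proof (rule N.integrable_const_bound[where B=1])
    show "AE x in N. norm (g (x a) * g (x b)) \<le> 1"
      using sp that gb by (auto intro!: AE_I2 simp: abs_mult intro: mult_le_one)
    show "(\<lambda>\<omega>. g (\<omega> a) * g (\<omega> b)) \<in> borel_measurable N"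
      unfolding N_def using that
      by (intro borel_measurable_times comp_meas gm) auto
  qed
  have ab: "(\<integral>\<omega>. g (\<omega> a) * g (\<omega> b) \<partial>N) \<le> (if b = a then 1 else 0)" if "a < n" "b < n" for a b
  proof (cases "b = a")
    case True
    have "(\<integral>\<omega>. g (\<omega> a) * g (\<omega> b) \<partial>N) \<le> (\<integral>\<omega>. 1 \<partial>N)"
      using intg[OF that] sp that gb
      by (intro integral_mono) (auto intro!: mult_le1)
    then show ?thesis using True N.prob_space by simp
  next
    case False
    define h where "h = (\<lambda>m. if m = a \<or> m = b then g else (\<lambda>_. 1::real))"
    have "(\<Prod>m<n. h m (\<omega> m)) = g (\<omega> a) * g (\<omega> b)" for \<omega>
    proof -
      have "(\<Prod>m<n. h m (\<omega> m)) = (\<Prod>m\<in>{m\<in>{..<n}. m = a \<or> m = b}. g (\<omega> m))"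
        by (subst prod.inter_filter) (auto simp: h_def intro!: prod.cong)
      also have "{m\<in>{..<n}. m = a \<or> m = b} = {a, b}" using that by auto
      finally show ?thesis using False by simp
    qed
    then have "(\<integral>\<omega>. g (\<omega> a) * g (\<omega> b) \<partial>N) = (\<integral>\<omega>. (\<Prod>m<n. h m (\<omega> m)) \<partial>N)" by simp
    also have "\<dots> = (\<Prod>m<n. integral\<^sup>L M (h m))"
      unfolding N_def
    proof (rule prod_integral_PiM[OF P])
      fix m assume "m < n"
      show "integrable M (h m)"
        unfolding h_def using gb by (auto intro!: integrable_const_bound[where B=1])
    qed
    also have "\<dots> = 0"
      using that by (intro prod_zero) (auto simp: h_def g0 intro!: bexI[of _ a])
    finally show ?thesis using False by simp
  qed
  have "(\<integral>\<omega>. (\<Sum>m<n. g (\<omega> m))^2 \<partial>N) = (\<integral>\<omega>. (\<Sum>a<n. \<Sum>b<n. g (\<omega> a) * g (\<omega> b)) \<partial>N)"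
    by (simp add: power2_eq_square sum_product)
  also have "\<dots> = (\<Sum>a<n. \<Sum>b<n. (\<integral>\<omega>. g (\<omega> a) * g (\<omega> b) \<partial>N))"
    using intg by (subst Bochner_Integration.integral_sum; auto intro!: integrable_sum Bochner_Integration.integral_sum sum.cong)
  also have "\<dots> \<le> (\<Sum>a<n. \<Sum>b<n. (if b = a then 1 else 0))"
    using ab by (intro sum_mono) auto
  also have "\<dots> = real n" by simp
  finally show ?thesis unfolding N_def .
qed



lemma mgf_PiM:
  fixes l :: real
  assumes P: "prob_space M" and A: "A \<in> sets M"
  shows "(\<integral>\<omega>. l ^ (\<Sum>m<n. of_bool (\<omega> m \<in> A)) \<partial>PiM {..<n} (\<lambda>_. M)) = (1 + measure M A * (l - 1)) ^ n"
proof -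
  interpret prob_space M by fact
  note A[measurable]
  define h where "h = (\<lambda>w. if w \<in> A then l else 1)"
  have "l ^ (\<Sum>m<n. of_bool (\<omega> m \<in> A)) = (\<Prod>m<n. h (\<omega> m))" for \<omega>
    by (subst power_sum) (auto simp: h_def intro!: prod.cong)
  then have "(\<integral>\<omega>. l ^ (\<Sum>m<n. of_bool (\<omega> m \<in> A)) \<partial>PiM {..<n} (\<lambda>_. M))
      = (\<integral>\<omega>. (\<Prod>m<n. (\<lambda>_. h) m (\<omega> m)) \<partial>PiM {..<n} (\<lambda>_. M))" by simp
  also have "\<dots> = (\<Prod>m<n. integral\<^sup>L M h)"
  proof (rule prod_integral_PiM[OF P])
    have hm: "h \<in> borel_measurable M" unfolding h_def using A by measurable
    show "integrable M h" for m
      by (rule integrable_const_bound[where B="\<bar>l\<bar> + 1"]) (auto simp: h_def hm)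
  qed
  also have "integral\<^sup>L M h = 1 + measure M A * (l - 1)"
  proof -
    have "h = (\<lambda>w. 1 + (l - 1) * indicator A w)" by (auto simp: h_def fun_eq_iff)
    then have "integral\<^sup>L M h = (\<integral>w. 1 + (l - 1) * indicator A w \<partial>M)" by simp
    also have "\<dots> = 1 + (l - 1) * measure M A"
      using A by (subst Bochner_Integration.integral_add) (auto simp: prob_space less_top[symmetric])
    finally show ?thesis by simp
  qed
  finally show ?thesis by simp
qed

lemma tail_PiM:
  fixes \<delta> :: real
  assumes P: "prob_space M" and A: "A \<in> sets M" and d: "\<delta> > 0" and n: "n > 0"
  shows "measure (PiM {..<n} (\<lambda>_. M)) {\<omega> \<in> space (PiM {..<n} (\<lambda>_. M)). \<delta> * n \<le> real (\<Sum>m<n. of_bool (\<omega> m \<in> A))}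
     \<le> (2 * measure M A powr \<delta>) ^ n"
proof -
  interpret prob_space M by fact
  note A[measurable]
  define N where "N = PiM {..<n} (\<lambda>_. M)"
  interpret N: prob_space N unfolding N_def by (intro prob_space_PiM) (simp add: P)
  define S where "S = (\<lambda>\<omega>. (\<Sum>m<n. of_bool (\<omega> m \<in> A)) :: nat)"
  define p where "p = measure M A"
  have p01: "0 \<le> p" "p \<le> 1" unfolding p_def by auto
  have ind: "\<And>x. (of_bool (x \<in> A)::real) = indicator A x" by (simp add: indicator_def)
  have Sr[measurable]: "(\<lambda>\<omega>. real (S \<omega>)) \<in> borel_measurable N"
    unfolding S_def N_def of_nat_sum
    by (intro borel_measurable_sum) (auto intro!: comp_meas borel_measurable_indicator A simp: ind)
  have Sm[measurable]: "S \<in> N \<rightarrow>\<^sub>M count_space UNIV"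
  proof (subst measurable_count_space_eq2_countable, safe)
    fix a :: nat
    have "S -` {a} \<inter> space N = {\<omega> \<in> space N. real (S \<omega>) = real a}" by auto
    also have "\<dots> \<in> sets N" by measurable
    finally show "S -` {a} \<inter> space N \<in> sets N" .
  qed auto
  have B: "{\<omega> \<in> space N. \<delta> * n \<le> real (S \<omega>)} \<in> sets N" by measurable
  have Sle: "S \<omega> \<le> n" for \<omega> unfolding S_def
    using sum_mono[of "{..<n}" "\<lambda>m. of_bool (\<omega> m \<in> A)::nat" "\<lambda>_. 1"] by simp
  have pw: "(2::real) ^ S \<omega> \<le> 2 ^ n" for \<omega> by (intro power_increasing Sle) auto
  have pw1: "(1::real) \<le> 2 ^ S \<omega>" for \<omega> by simp
  have nb: "norm ((2::real) ^ S \<omega> - 1) \<le> 2 ^ n" "norm ((2::real) ^ S \<omega>) \<le> 2 ^ n" for \<omega>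
    using pw[of \<omega>] pw1[of \<omega>] by (simp_all only: real_norm_def abs_le_iff power_abs abs_numeral; linarith)+
  have intB: "integrable N (indicator {\<omega> \<in> space N. \<delta> * n \<le> real (S \<omega>)} :: _ \<Rightarrow> real)"
  proof (rule N.integrable_const_bound[where B=1])
    show "AE x in N. norm (indicator {\<omega> \<in> space N. \<delta> * n \<le> real (S \<omega>)} x :: real) \<le> 1"
      by (intro AE_I2) (simp add: indicator_def)
  qed (rule borel_measurable_indicator[OF B])
  have meas: "measure N {\<omega> \<in> space N. \<delta> * n \<le> real (S \<omega>)} = (\<integral>\<omega>. indicator {\<omega> \<in> space N. \<delta> * n \<le> real (S \<omega>)} \<omega> \<partial>N)"
    by simp
  have "measure N {\<omega> \<in> space N. \<delta> * n \<le> real (S \<omega>)} \<le> (2 * p powr \<delta>) ^ n"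
  proof (cases "p = 0")
    case True
    have "(\<integral>\<omega>. indicator {\<omega> \<in> space N. \<delta> * n \<le> real (S \<omega>)} \<omega> \<partial>N) \<le> (\<integral>\<omega>. (2::real) ^ S \<omega> - 1 \<partial>N)"
    proof (rule integral_mono)
      show "integrable N (\<lambda>\<omega>. 2 ^ S \<omega> - 1 :: real)"
        by (rule N.integrable_const_bound[where B="2^n"]) (use nb in \<open>auto intro!: AE_I2\<close>)
      fix \<omega> show "indicator {\<omega> \<in> space N. \<delta> * n \<le> real (S \<omega>)} \<omega> \<le> (2 ^ S \<omega> - 1 :: real)"
      proof (cases "\<delta> * n \<le> real (S \<omega>)")
        case True
        then have "S \<omega> \<ge> 1" using d n by (metis One_nat_def Suc_leI gr0I mult_pos_pos of_nat_0 of_nat_0_less_iff not_le)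
        then have "(2::real) ^ S \<omega> \<ge> 2 ^ 1" by (intro power_increasing) auto
        then show ?thesis by (auto simp: indicator_def)
      qed (auto simp: indicator_def)
    qed (fact intB)
    also have "\<dots> = (\<integral>\<omega>. (2::real) ^ S \<omega> \<partial>N) - 1"
      by (subst Bochner_Integration.integral_diff)
         (use nb in \<open>auto simp: N.prob_space intro!: N.integrable_const_bound[where B="2^n"] AE_I2\<close>)
    also have "(\<integral>\<omega>. (2::real) ^ S \<omega> \<partial>N) = (1 + p * (2 - 1)) ^ n"
      unfolding S_def N_def p_def by (rule mgf_PiM[OF P A])
    finally show ?thesis using True meas[symmetric] n by (simp add: power_0_left)
  next
    case False
    then have pp: "p > 0" using p01 by auto
    define l where "l = 1 / p"
    have l1: "l \<ge> 1" unfolding l_def using pp p01 by simp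
    have "(\<integral>\<omega>. indicator {\<omega> \<in> space N. \<delta> * n \<le> real (S \<omega>)} \<omega> \<partial>N) \<le> (\<integral>\<omega>. l ^ S \<omega> / l powr (\<delta> * n) \<partial>N)"
    proof (rule integral_mono)
      show "integrable N (\<lambda>\<omega>. l ^ S \<omega> / l powr (\<delta> * n))"
        by (rule N.integrable_const_bound[where B="l^n / l powr (\<delta> * n)"])
           (use l1 in \<open>auto intro!: AE_I2 power_increasing Sle divide_right_mono\<close>)
      fix \<omega> show "indicator {\<omega> \<in> space N. \<delta> * n \<le> real (S \<omega>)} \<omega> \<le> l ^ S \<omega> / l powr (\<delta> * n)"
      proof (cases "\<delta> * n \<le> real (S \<omega>)")
        case True
        have "l powr (\<delta> * n) \<le> l powr (real (S \<omega>))" using True l1 by (intro powr_mono) auto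
        also have "\<dots> = l ^ S \<omega>" using l1 by (simp add: powr_realpow)
        finally show ?thesis using True l1 by (auto simp: indicator_def)
      qed (use l1 in \<open>auto simp: indicator_def\<close>)
    qed (fact intB)
    also have "\<dots> = (\<integral>\<omega>. l ^ S \<omega> \<partial>N) / l powr (\<delta> * n)" by simp
    also have "(\<integral>\<omega>. l ^ S \<omega> \<partial>N) = (1 + p * (l - 1)) ^ n"
      unfolding S_def N_def p_def by (rule mgf_PiM[OF P A])
    also have "(1 + p * (l - 1)) ^ n / l powr (\<delta> * n) = (2 - p) ^ n * (p powr \<delta>) ^ n"
    proof -
      have "1 + p * (l - 1) = 2 - p" using pp by (simp add: l_def algebra_simps)
      moreover have "1 / l powr (\<delta> * n) = (p powr \<delta>) ^ n"
        using pp by (simp add: l_def powr_divide powr_powr powr_realpow[symmetric] mult.commute)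
      ultimately show ?thesis by (metis times_divide_eq_right mult.right_neutral)
    qed
    also have "\<dots> \<le> 2 ^ n * (p powr \<delta>) ^ n"
      using pp p01 by (intro mult_right_mono power_mono) auto
    also have "\<dots> = (2 * p powr \<delta>) ^ n" by (simp add: power_mult_distrib)
    finally show ?thesis using meas[symmetric] by simp
  qed
  then show ?thesis unfolding N_def S_def p_def by simp
qed



lemma avg01:
  shows "0 \<le> (\<Sum>i<n. of_bool (P i)::real) / real n" "(\<Sum>i<n. of_bool (P i)::real) / real n \<le> 1"
proof -
  have "(\<Sum>i<n. of_bool (P i)::real) \<le> real n"
    using sum_bounded_above[of "{..<n}" "\<lambda>i. of_bool (P i)::real" 1] by simp
  then show "(\<Sum>i<n. of_bool (P i)::real) / real n \<le> 1"
    by (cases "n = 0") (auto simp: divide_le_eq)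
qed (simp add: sum_nonneg)

lemma abs_diff01: "0 \<le> (x::real) \<Longrightarrow> x \<le> 1 \<Longrightarrow> 0 \<le> y \<Longrightarrow> y \<le> 1 \<Longrightarrow> \<bar>x - y\<bar> \<le> 1"
  by linarith

lemma ofbool_int01:
  assumes "prob_space M" "f \<in> M \<rightarrow>\<^sub>M count_space UNIV"
  shows "0 \<le> (\<integral>w. of_bool (f w) \<partial>M :: real)" "(\<integral>w. of_bool (f w) \<partial>M) \<le> (1::real)"
proof -
  interpret prob_space M by fact
  have m: "(\<lambda>w. of_bool (f w)::real) \<in> borel_measurable M"
    using measurable_compose[OF assms(2), of "\<lambda>b. of_bool b::real" borel] by simp
  show "0 \<le> (\<integral>w. of_bool (f w) \<partial>M :: real)" by (rule Bochner_Integration.integral_nonneg) simp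
  have "(\<integral>w. of_bool (f w) \<partial>M) \<le> (\<integral>w. 1 \<partial>M :: real)"
    by (rule Bochner_Integration.integral_mono) (auto intro!: integrable_const_bound[where B=1] simp: m)
  then show "(\<integral>w. of_bool (f w) \<partial>M) \<le> (1::real)" by (simp add: prob_space)
qed

definition Gf :: "('a \<Rightarrow> nat \<Rightarrow> bool) \<Rightarrow> 'a measure \<Rightarrow> nat \<Rightarrow> (nat \<Rightarrow> 'a) \<Rightarrow> real" where
  "Gf X M n \<omega> = (SUP j. \<bar>(\<Sum>m<n. of_bool (X (\<omega> m) j)) / real n - (\<integral>w. of_bool (X w j) \<partial>M)\<bar>)"

lemma Xj_meas:
  assumes "X \<in> M \<rightarrow>\<^sub>M seq_space"
  shows "(\<lambda>w. X w j) \<in> M \<rightarrow>\<^sub>M count_space UNIV"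
  using measurable_compose[OF assms measurable_component_singleton[of j UNIV "\<lambda>_. count_space UNIV"]] by simp

lemma Xj_meas_real:
  assumes "X \<in> M \<rightarrow>\<^sub>M seq_space"
  shows "(\<lambda>w. of_bool (X w j) :: real) \<in> borel_measurable M"
  using measurable_compose[OF Xj_meas[OF assms], of "\<lambda>b. of_bool b::real" borel] by simp

lemma bdd_gen:
  assumes "prob_space M" "X \<in> M \<rightarrow>\<^sub>M seq_space"
  shows "\<bar>(\<Sum>m<n. of_bool (Q m j)) / real n - (\<integral>w. of_bool (X w j) \<partial>M)\<bar> \<le> (1::real)"
    and "bdd_above (range (\<lambda>j. \<bar>(\<Sum>m<n. of_bool (Q m j)) / real n - (\<integral>w. of_bool (X w j) \<partial>M :: real)\<bar>))"
proof -
  show b: "\<bar>(\<Sum>m<n. of_bool (Q m j)) / real n - (\<integral>w. of_bool (X w j) \<partial>M)\<bar> \<le> (1::real)" for j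
    by (intro abs_diff01 avg01 ofbool_int01[OF assms(1) Xj_meas[OF assms(2)]])
  show "bdd_above (range (\<lambda>j. \<bar>(\<Sum>m<n. of_bool (Q m j)) / real n - (\<integral>w. of_bool (X w j) \<partial>M :: real)\<bar>))"
    using b by (intro bdd_aboveI[where M=1]) auto
qed

lemma Gf_bounds:
  assumes "prob_space M" "X \<in> M \<rightarrow>\<^sub>M seq_space"
  shows "bdd_above (range (\<lambda>j. \<bar>(\<Sum>m<n. of_bool (X (\<omega> m) j)) / real n - (\<integral>w. of_bool (X w j) \<partial>M)\<bar>))"
    and "0 \<le> Gf X M n \<omega>" "Gf X M n \<omega> \<le> 1"
proof -
  have b: "\<bar>(\<Sum>m<n. of_bool (X (\<omega> m) j)) / real n - (\<integral>w. of_bool (X w j) \<partial>M)\<bar> \<le> 1" for j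
    by (intro abs_diff01 avg01 ofbool_int01[OF assms(1) Xj_meas[OF assms(2)]])
  show bdd: "bdd_above (range (\<lambda>j. \<bar>(\<Sum>m<n. of_bool (X (\<omega> m) j)) / real n - (\<integral>w. of_bool (X w j) \<partial>M)\<bar>))"
    using b by (intro bdd_aboveI[where M=1]) auto
  show "0 \<le> Gf X M n \<omega>" unfolding Gf_def
    by (rule order_trans[OF abs_ge_zero cSUP_upper[OF UNIV_I bdd]])
  show "Gf X M n \<omega> \<le> 1" unfolding Gf_def
    using b by (intro cSUP_least) auto
qed

lemma transfer:
  assumes P: "prob_space M" and Xm: "X \<in> M \<rightarrow>\<^sub>M seq_space"
  shows "Delta n (distr M seq_space X) = (\<integral>\<omega>. Gf X M n \<omega> \<partial>PiM {..<n} (\<lambda>_. M))"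
proof -
  interpret prob_space M by fact
  define \<mu> where "\<mu> = distr M seq_space X"
  define N where "N = PiM {..<n} (\<lambda>_. M)"
  have e: "integral\<^sup>L \<mu> (\<lambda>x. of_bool (x j)) = (\<integral>w. of_bool (X w j) \<partial>M :: real)" for j :: nat
  proof -
    have "(\<lambda>x::nat\<Rightarrow>bool. of_bool (x j) :: real) \<in> borel_measurable seq_space"
      using Xj_meas_real[of "\<lambda>x. x" seq_space j] by simp
    then show ?thesis unfolding \<mu>_def using Xm by (simp add: integral_distr)
  qed
  define F where "F = (\<lambda>x :: nat \<Rightarrow> nat \<Rightarrow> bool. SUP j. \<bar>(\<Sum>i<n. of_bool (x i j)) / real n - (\<integral>w. of_bool (X w j) \<partial>M)\<bar>)"
  have Fm: "F \<in> borel_measurable (PiM {..<n} (\<lambda>_. seq_space))"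
    unfolding F_def
  proof (rule borel_measurable_cSUP)
    fix j :: nat
    have "(\<lambda>x :: nat \<Rightarrow> nat \<Rightarrow> bool. (\<Sum>i<n. of_bool (x i j) :: real)) \<in> borel_measurable (PiM {..<n} (\<lambda>_. seq_space))"
      by (intro borel_measurable_sum comp_meas[where f="\<lambda>y. of_bool (y j)"] Xj_meas_real[where X="\<lambda>x. x"]) auto
    then show "(\<lambda>x :: nat \<Rightarrow> nat \<Rightarrow> bool. \<bar>(\<Sum>i<n. of_bool (x i j)) / real n - (\<integral>w. of_bool (X w j) \<partial>M)\<bar>) \<in> borel_measurable (PiM {..<n} (\<lambda>_. seq_space))"
      by measurable
  next
    fix x :: "nat \<Rightarrow> nat \<Rightarrow> bool"
    show "bdd_above (range (\<lambda>j. \<bar>(\<Sum>i<n. of_bool (x i j)) / real n - (\<integral>w. of_bool (X w j) \<partial>M)\<bar>))"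
      by (rule bdd_gen(2)[OF P Xm])
  qed simp
  have D: "Delta n \<mu> = integral\<^sup>L (PiM {..<n} (\<lambda>_. \<mu>)) F"
    unfolding Delta_def F_def e ..
  have sm: "sets \<mu> = sets seq_space" unfolding \<mu>_def by simp
  have Xm': "X \<in> M \<rightarrow>\<^sub>M \<mu>" using Xm by (simp add: measurable_cong_sets[OF refl sm])
  have Pmu: "prob_space \<mu>" unfolding \<mu>_def by (rule prob_space_distr[OF Xm])
  have dmu: "distr M \<mu> X = \<mu>" unfolding \<mu>_def by (rule distr_cong) auto
  have sP: "sets (PiM {..<n} (\<lambda>_. \<mu>)) = sets (PiM {..<n} (\<lambda>_. seq_space))"
    by (rule sets_PiM_cong) (auto simp: sm)
  have Fm': "F \<in> borel_measurable (PiM {..<n} (\<lambda>_. \<mu>))"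
    using Fm by (simp add: measurable_cong_sets[OF sP refl])
  have "PiM {..<n} (\<lambda>_. \<mu>) = PiM {..<n} (\<lambda>_. distr M \<mu> X)" by (simp add: dmu)
  also have "\<dots> = distr N (PiM {..<n} (\<lambda>_. \<mu>)) (compose {..<n} X)"
    unfolding N_def
    by (rule distr_PiM_finite_prob_space'[symmetric]) (auto simp: P Pmu Xm')
  finally have "integral\<^sup>L (PiM {..<n} (\<lambda>_. \<mu>)) F = integral\<^sup>L (distr N (PiM {..<n} (\<lambda>_. \<mu>)) (compose {..<n} X)) F"
    by simp
  also have "\<dots> = (\<integral>\<omega>. F (compose {..<n} X \<omega>) \<partial>N)"
  proof (rule integral_distr[OF _ Fm'])
    show "compose {..<n} X \<in> N \<rightarrow>\<^sub>M PiM {..<n} (\<lambda>_. \<mu>)"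
      unfolding N_def compose_def
      by (rule measurable_restrict) (auto intro!: comp_meas[OF Xm'])
  qed
  also have "\<dots> = (\<integral>\<omega>. Gf X M n \<omega> \<partial>N)"
  proof (intro Bochner_Integration.integral_cong refl)
    fix \<omega>
    have "(\<Sum>i<n. of_bool (compose {..<n} X \<omega> i j)::real) = (\<Sum>m<n. of_bool (X (\<omega> m) j))" for j
      by (intro sum.cong) (auto simp: compose_def)
    then show "F (compose {..<n} X \<omega>) = Gf X M n \<omega>" unfolding F_def Gf_def by simp
  qed
  finally show ?thesis using D unfolding \<mu>_def N_def by simp
qed



lemma pair_bound:
  fixes Z :: "nat \<Rightarrow> 'a \<Rightarrow> real"
  assumes cov: "\<And>i. {w\<in>space M. of_bool (X w i) \<noteq> Z (jf i) w} \<subseteq> (\<Union>k\<in>Kf i. E k)"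
    and fin: "\<And>i. finite (Kf i)" and j: "jf i' = jf i" and w: "w \<in> space M"
  shows "\<bar>of_bool (X w i) - of_bool (X w i')\<bar> \<le> (\<Sum>k\<in>Kf i. indicator (E k) w) + (\<Sum>k\<in>Kf i'. indicator (E k) w :: real)"
proof (cases "X w i = X w i'")
  case True
  then show ?thesis by (simp add: sum_nonneg add_nonneg_nonneg)
next
  case False
  have lhs: "\<bar>of_bool (X w i) - of_bool (X w i') :: real\<bar> \<le> 1" by auto
  have s1: "0 \<le> (\<Sum>k\<in>Kf i. indicator (E k) w :: real)" "0 \<le> (\<Sum>k\<in>Kf i'. indicator (E k) w :: real)"
    by (simp_all add: sum_nonneg)
  have "of_bool (X w i) \<noteq> Z (jf i) w \<or> of_bool (X w i') \<noteq> Z (jf i') w"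
    using False j by (cases "X w i"; cases "X w i'") auto
  then show ?thesis
  proof
    assume "of_bool (X w i) \<noteq> Z (jf i) w"
    then obtain k where k: "k \<in> Kf i" "w \<in> E k" using cov[of i] w by blast
    have "1 \<le> (\<Sum>k\<in>Kf i. indicator (E k) w :: real)"
      using member_le_sum[of k "Kf i" "\<lambda>k. indicator (E k) w :: real"] k fin by simp
    then show ?thesis using lhs s1 by linarith
  next
    assume "of_bool (X w i') \<noteq> Z (jf i') w"
    then obtain k where k: "k \<in> Kf i'" "w \<in> E k" using cov[of i'] w by blast
    have "1 \<le> (\<Sum>k\<in>Kf i'. indicator (E k) w :: real)"
      using member_le_sum[of k "Kf i'" "\<lambda>k. indicator (E k) w :: real"] k fin by simp
    then show ?thesis using lhs s1 by linarith
  qed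
qed

lemma emp_pair_bound:
  fixes Z :: "nat \<Rightarrow> 'a \<Rightarrow> real"
  assumes cov: "\<And>i. {w\<in>space M. of_bool (X w i) \<noteq> Z (jf i) w} \<subseteq> (\<Union>k\<in>Kf i. E k)"
    and fin: "\<And>i. finite (Kf i)" and j: "jf i' = jf i" and w: "\<And>m. m < n \<Longrightarrow> \<omega> m \<in> space M"
  shows "\<bar>(\<Sum>m<n. of_bool (X (\<omega> m) i)) / real n - (\<Sum>m<n. of_bool (X (\<omega> m) i')) / real n\<bar>
     \<le> (\<Sum>k\<in>Kf i. (\<Sum>m<n. indicator (E k) (\<omega> m)) / real n) + (\<Sum>k\<in>Kf i'. (\<Sum>m<n. indicator (E k) (\<omega> m)) / real n :: real)"
proof -
  have "\<bar>(\<Sum>m<n. of_bool (X (\<omega> m) i)) - (\<Sum>m<n. of_bool (X (\<omega> m) i')) :: real\<bar>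
      = \<bar>\<Sum>m<n. of_bool (X (\<omega> m) i) - of_bool (X (\<omega> m) i') :: real\<bar>"
    by (simp add: sum_subtractf)
  also have "\<dots> \<le> (\<Sum>m<n. \<bar>of_bool (X (\<omega> m) i) - of_bool (X (\<omega> m) i') :: real\<bar>)"
    by (rule sum_abs)
  also have "\<dots> \<le> (\<Sum>m<n. (\<Sum>k\<in>Kf i. indicator (E k) (\<omega> m)) + (\<Sum>k\<in>Kf i'. indicator (E k) (\<omega> m) :: real))"
    by (intro sum_mono pair_bound[where M=M and X=X and Z=Z and jf=jf and Kf=Kf and E=E, OF cov fin j] w) auto
  also have "\<dots> = (\<Sum>k\<in>Kf i. (\<Sum>m<n. indicator (E k) (\<omega> m))) + (\<Sum>k\<in>Kf i'. (\<Sum>m<n. indicator (E k) (\<omega> m)) :: real)"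
    by (simp add: sum.distrib sum.swap[of _ "{..<n}"])
  finally have *: "\<bar>(\<Sum>m<n. of_bool (X (\<omega> m) i)) - (\<Sum>m<n. of_bool (X (\<omega> m) i')) :: real\<bar>
     \<le> (\<Sum>k\<in>Kf i. (\<Sum>m<n. indicator (E k) (\<omega> m))) + (\<Sum>k\<in>Kf i'. (\<Sum>m<n. indicator (E k) (\<omega> m)) :: real)" .
  show ?thesis
  proof (cases "n = 0")
    case True then show ?thesis by simp
  next
    case False
    then have "\<bar>(\<Sum>m<n. of_bool (X (\<omega> m) i)) / real n - (\<Sum>m<n. of_bool (X (\<omega> m) i')) / real n\<bar>
       = \<bar>(\<Sum>m<n. of_bool (X (\<omega> m) i)) - (\<Sum>m<n. of_bool (X (\<omega> m) i')) :: real\<bar> / real n"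
      by (simp add: diff_divide_distrib[symmetric])
    also have "\<dots> \<le> ((\<Sum>k\<in>Kf i. (\<Sum>m<n. indicator (E k) (\<omega> m))) + (\<Sum>k\<in>Kf i'. (\<Sum>m<n. indicator (E k) (\<omega> m)) :: real)) / real n"
      using * by (intro divide_right_mono) auto
    also have "\<dots> = (\<Sum>k\<in>Kf i. (\<Sum>m<n. indicator (E k) (\<omega> m)) / real n) + (\<Sum>k\<in>Kf i'. (\<Sum>m<n. indicator (E k) (\<omega> m)) / real n)"
      by (simp add: add_divide_distrib sum_divide_distrib)
    finally show ?thesis .
  qed
qed

lemma exp_pair_bound:
  fixes Z :: "nat \<Rightarrow> 'a \<Rightarrow> real"
  assumes P: "prob_space M" and Xm: "X \<in> M \<rightarrow>\<^sub>M seq_space" and E: "\<And>k. E k \<in> sets M"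
    and cov: "\<And>i. {w\<in>space M. of_bool (X w i) \<noteq> Z (jf i) w} \<subseteq> (\<Union>k\<in>Kf i. E k)"
    and fin: "\<And>i. finite (Kf i)" and j: "jf i' = jf i"
  shows "\<bar>(\<integral>w. of_bool (X w i) \<partial>M) - (\<integral>w. of_bool (X w i') \<partial>M)\<bar>
     \<le> (\<Sum>k\<in>Kf i. measure M (E k)) + (\<Sum>k\<in>Kf i'. measure M (E k))"
proof -
  interpret prob_space M by fact
  have ii: "integrable M (\<lambda>w. of_bool (X w l) :: real)" for l
    by (rule integrable_const_bound[where B=1]) (auto simp: Xj_meas_real[OF Xm])
  have ind: "integrable M (indicator (E k) :: _ \<Rightarrow> real)" for k
    by (rule integrable_const_bound[where B=1]) (auto intro: borel_measurable_indicator[OF E])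
  have "\<bar>(\<integral>w. of_bool (X w i) \<partial>M) - (\<integral>w. of_bool (X w i') \<partial>M)\<bar>
      = \<bar>\<integral>w. of_bool (X w i) - of_bool (X w i') \<partial>M :: real\<bar>"
    using ii by (simp add: Bochner_Integration.integral_diff)
  also have "\<dots> \<le> (\<integral>w. \<bar>of_bool (X w i) - of_bool (X w i')\<bar> \<partial>M)"
    by (rule integral_abs_bound)
  also have "\<dots> \<le> (\<integral>w. (\<Sum>k\<in>Kf i. indicator (E k) w) + (\<Sum>k\<in>Kf i'. indicator (E k) w) \<partial>M)"
    using ii ind by (intro Bochner_Integration.integral_mono pair_bound[where M=M and X=X and Z=Z and jf=jf and Kf=Kf and E=E, OF cov fin j]) auto
  also have "\<dots> = (\<Sum>k\<in>Kf i. measure M (E k)) + (\<Sum>k\<in>Kf i'. measure M (E k))"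
    using ind E by (simp add: Bochner_Integration.integral_add Bochner_Integration.integral_sum integrable_sum)
  finally show ?thesis .
qed



lemma emp_meas:
  assumes "X \<in> M \<rightarrow>\<^sub>M seq_space"
  shows "(\<lambda>\<omega>. (\<Sum>m<n. of_bool (X (\<omega> m) i)) / real n :: real) \<in> borel_measurable (PiM {..<n} (\<lambda>_. M))"
  by (intro borel_measurable_divide borel_measurable_sum comp_meas Xj_meas_real assms borel_measurable_const) auto

lemma abs_le_sq: "(\<nu>::real) > 0 \<Longrightarrow> \<bar>y\<bar> \<le> \<nu> + y^2 / \<nu>"
proof (cases "\<bar>y\<bar> \<le> \<nu>")
  case False
  assume nu: "\<nu> > 0"
  then have "\<bar>y\<bar> * \<nu> \<le> \<bar>y\<bar> * \<bar>y\<bar>" using False by (intro mult_left_mono) auto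
  then have "\<bar>y\<bar> \<le> y^2 / \<nu>" using nu by (simp add: le_divide_eq power2_eq_square abs_mult_self_eq)
  then show ?thesis using nu by linarith
qed (auto intro: add_increasing2)

lemma lln_bound:
  assumes P: "prob_space M" and Xm: "X \<in> M \<rightarrow>\<^sub>M seq_space" and n: "n > 0" and nu: "\<nu> > 0"
  shows "(\<integral>\<omega>. \<bar>(\<Sum>m<n. of_bool (X (\<omega> m) i)) / real n - (\<integral>w. of_bool (X w i) \<partial>M)\<bar> \<partial>PiM {..<n} (\<lambda>_. M))
    \<le> \<nu> + 1 / (real n * \<nu>)"
proof -
  interpret prob_space M by fact
  define N where "N = PiM {..<n} (\<lambda>_. M)"
  interpret N: prob_space N unfolding N_def by (intro prob_space_PiM) (simp add: P)
  define e where "e = (\<integral>w. of_bool (X w i) \<partial>M :: real)"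
  define g where "g = (\<lambda>w. of_bool (X w i) - e)"
  have e01: "0 \<le> e" "e \<le> 1" unfolding e_def using ofbool_int01[OF P Xj_meas[OF Xm]] by auto
  have gm: "g \<in> borel_measurable M" unfolding g_def using Xj_meas_real[OF Xm] by measurable
  have gb: "\<bar>g w\<bar> \<le> 1" for w unfolding g_def using e01 by (cases "X w i") auto
  have g0: "integral\<^sup>L M g = 0" unfolding g_def e_def
    by (subst Bochner_Integration.integral_diff)
       (auto simp: prob_space intro!: integrable_const_bound[where B=1] Xj_meas_real[OF Xm])
  define y where "y = (\<lambda>\<omega>. (\<Sum>m<n. of_bool (X (\<omega> m) i)) / real n - e)"
  have y: "y \<omega> = (\<Sum>m<n. g (\<omega> m)) / real n" for \<omega>
    using n unfolding y_def g_def by (simp add: sum_subtractf diff_divide_distrib)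
  have ym: "y \<in> borel_measurable N" unfolding y_def N_def using emp_meas[OF Xm] by measurable
  have sqm: "(\<lambda>\<omega>. (\<Sum>m<n. g (\<omega> m))^2) \<in> borel_measurable N"
    unfolding N_def by (intro borel_measurable_power borel_measurable_sum comp_meas gm) auto
  have sqb: "norm ((\<Sum>m<n. g (\<omega> m))^2) \<le> real n ^ 2" for \<omega>
  proof -
    have "\<bar>\<Sum>m<n. g (\<omega> m)\<bar> \<le> real n"
      using order_trans[OF sum_abs sum_bounded_above[of "{..<n}" "\<lambda>m. \<bar>g (\<omega> m)\<bar>" 1]] gb by auto
    then have "\<bar>\<Sum>m<n. g (\<omega> m)\<bar>^2 \<le> real n ^ 2" by (intro power_mono) auto
    then show ?thesis by simp
  qed
  have sqi: "integrable N (\<lambda>\<omega>. (\<Sum>m<n. g (\<omega> m))^2)"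
    by (rule N.integrable_const_bound[OF AE_I2[OF sqb] sqm])
  have yb: "norm (y \<omega>) \<le> 1" for \<omega>
    unfolding y_def real_norm_def by (intro abs_diff01 avg01 e01)
  have "(\<integral>\<omega>. \<bar>y \<omega>\<bar> \<partial>N) \<le> (\<integral>\<omega>. \<nu> + (\<Sum>m<n. g (\<omega> m))^2 / (real n ^ 2 * \<nu>) \<partial>N)"
  proof (rule Bochner_Integration.integral_mono)
    show "integrable N (\<lambda>\<omega>. \<bar>y \<omega>\<bar>)"
      by (rule N.integrable_const_bound[where B=1]) (use yb ym in auto)
    show "integrable N (\<lambda>\<omega>. \<nu> + (\<Sum>m<n. g (\<omega> m))^2 / (real n ^ 2 * \<nu>))"
      using sqi by auto
    fix \<omega>
    have "\<bar>y \<omega>\<bar> \<le> \<nu> + (y \<omega>)^2 / \<nu>" by (rule abs_le_sq[OF nu])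
    also have "(y \<omega>)^2 / \<nu> = (\<Sum>m<n. g (\<omega> m))^2 / (real n ^ 2 * \<nu>)"
      by (simp add: y power_divide)
    finally show "\<bar>y \<omega>\<bar> \<le> \<nu> + (\<Sum>m<n. g (\<omega> m))^2 / (real n ^ 2 * \<nu>)" .
  qed
  also have "\<dots> = \<nu> + (\<integral>\<omega>. (\<Sum>m<n. g (\<omega> m))^2 \<partial>N) / (real n ^ 2 * \<nu>)"
    using sqi by (simp add: N.prob_space)
  also have "\<dots> \<le> \<nu> + real n / (real n ^ 2 * \<nu>)"
    using second_moment_PiM[OF P gm gb g0, of n] nu n unfolding N_def
    by (intro add_left_mono divide_right_mono) auto
  also have "real n / (real n ^ 2 * \<nu>) = 1 / (real n * \<nu>)"
    using n by (simp add: power2_eq_square)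
  finally show ?thesis unfolding y_def e_def N_def .
qed



lemma main_bound:
  fixes M :: "'a measure" and X :: "'a \<Rightarrow> nat \<Rightarrow> bool" and E :: "nat \<Rightarrow> 'a set"
    and Z :: "nat \<Rightarrow> 'a \<Rightarrow> real" and jf :: "nat \<Rightarrow> nat" and Kf :: "nat \<Rightarrow> nat set" and K J :: nat and \<delta> \<epsilon> \<nu> :: real
  assumes P: "prob_space M" and Xm: "X \<in> M \<rightarrow>\<^sub>M seq_space"
    and E: "\<And>k. E k \<in> sets M" and Eeps: "\<And>k. measure M (E k) \<le> \<epsilon>"
    and jf: "\<And>i. jf i \<in> {1..J}" and fin: "\<And>i. finite (Kf i)" and Kc: "\<And>i. card (Kf i) \<le> K"
    and cov: "\<And>i. {w \<in> space M. of_bool (X w i) \<noteq> Z (jf i) w} \<subseteq> (\<Union>k\<in>Kf i. E k)"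
    and n: "n > 0" and d: "\<delta> > 0" and nu: "\<nu> > 0"
    and summ: "summable (\<lambda>k. (2 * measure M (E k) powr \<delta>) ^ n)"
  shows "(\<integral>\<omega>. Gf X M n \<omega> \<partial>PiM {..<n} (\<lambda>_. M))
    \<le> J * (\<nu> + 1 / (real n * \<nu>)) + 2 * K * \<delta> + 2 * K * (\<Sum>k. (2 * measure M (E k) powr \<delta>) ^ n) + 2 * K * \<epsilon>"
proof -
  interpret prob_space M by fact
  define N where "N = PiM {..<n} (\<lambda>_. M)"
  interpret N: prob_space N unfolding N_def by (intro prob_space_PiM) (simp add: P)
  have sp: "\<omega> \<in> space N \<Longrightarrow> m < n \<Longrightarrow> \<omega> m \<in> space M" for \<omega> m
    unfolding N_def by (auto simp: space_PiM)
  have eps0: "0 \<le> \<epsilon>" using Eeps[of 0] measure_nonneg[of M "E 0"] by linarith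
  define a where "a = (\<lambda>i \<omega>. (\<Sum>m<n. of_bool (X (\<omega> m) i)) / real n :: real)"
  define e where "e = (\<lambda>i. (\<integral>w. of_bool (X w i) \<partial>M :: real))"
  define r where "r = (\<lambda>j. SOME i. jf i = j)"
  have rr: "jf (r (jf i)) = jf i" for i unfolding r_def by (rule someI[of "\<lambda>i'. jf i' = jf i" i]) simp
  define cnt where "cnt = (\<lambda>k \<omega>. (\<Sum>m<n. of_bool (\<omega> m \<in> E k)) :: nat)"
  define Uk where "Uk = (\<lambda>k. {\<omega> \<in> space N. \<delta> * n \<le> real (cnt k \<omega>)})"
  define U where "U = (\<Union>k. Uk k)"
  have ind: "\<And>x A. (of_bool (x \<in> A)::real) = indicator A x" by (simp add: indicator_def)
  have Ukm: "Uk k \<in> sets N" for k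
  proof -
    have "(\<lambda>\<omega>. real (cnt k \<omega>)) \<in> borel_measurable N"
      unfolding cnt_def N_def of_nat_sum
      by (intro borel_measurable_sum) (auto intro!: comp_meas borel_measurable_indicator E simp: ind)
    then show ?thesis unfolding Uk_def by measurable
  qed
  have Um: "U \<in> sets N" unfolding U_def using Ukm by auto
  have cntle: "real (cnt k \<omega>) \<le> real n" for k \<omega>
    unfolding cnt_def using sum_bounded_above[of "{..<n}" "\<lambda>m. of_bool (\<omega> m \<in> E k)::nat" 1] by simp
  have Pn: "(\<Sum>m<n. indicator (E k) (\<omega> m)) / real n \<le> \<delta> + indicator U \<omega>" if "\<omega> \<in> space N" for k \<omega>
  proof -
    have eq: "(\<Sum>m<n. indicator (E k) (\<omega> m)) = real (cnt k \<omega>)"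
      unfolding cnt_def of_nat_sum by (simp add: ind)
    show ?thesis
    proof (cases "\<omega> \<in> U")
      case True
      have "real (cnt k \<omega>) / real n \<le> 1" using cntle n by (simp add: divide_le_eq)
      then show ?thesis using True d eq by simp
    next
      case False
      then have "\<omega> \<notin> Uk k" unfolding U_def by auto
      then have "real (cnt k \<omega>) < \<delta> * n" using that unfolding Uk_def by auto
      then have "real (cnt k \<omega>) / real n < \<delta>" using n by (simp add: divide_less_eq)
      then show ?thesis using False eq by simp
    qed
  qed
  have Ksum: "(\<Sum>k\<in>Kf i. (\<Sum>m<n. indicator (E k) (\<omega> m)) / real n) \<le> K * (\<delta> + indicator U \<omega>)"
    if "\<omega> \<in> space N" for i \<omega>
  proof -
    have "(\<Sum>k\<in>Kf i. (\<Sum>m<n. indicator (E k) (\<omega> m)) / real n) \<le> real (card (Kf i)) * (\<delta> + indicator U \<omega>)"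
      using sum_bounded_above[of "Kf i" "\<lambda>k. (\<Sum>m<n. indicator (E k) (\<omega> m)) / real n" "\<delta> + indicator U \<omega>"] Pn[OF that]
      by simp
    also have "\<dots> \<le> K * (\<delta> + indicator U \<omega>)"
      using Kc[of i] d by (intro mult_right_mono) (auto intro: add_nonneg_nonneg)
    finally show ?thesis .
  qed
  have Ksum2: "(\<Sum>k\<in>Kf i. measure M (E k)) \<le> K * \<epsilon>" for i
  proof -
    have "(\<Sum>k\<in>Kf i. measure M (E k)) \<le> real (card (Kf i)) * \<epsilon>"
      using sum_bounded_above[of "Kf i" "\<lambda>k. measure M (E k)" \<epsilon>] Eeps by simp
    also have "\<dots> \<le> K * \<epsilon>" using Kc[of i] eps0 by (intro mult_right_mono) auto
    finally show ?thesis .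
  qed
  define T where "T = (\<lambda>\<omega>. (\<Sum>j\<in>{1..J}. \<bar>a (r j) \<omega> - e (r j)\<bar>) + (2 * real K) * indicator U \<omega> + (2 * K * \<delta> + 2 * K * \<epsilon>))"
  have key: "\<bar>a i \<omega> - e i\<bar> \<le> T \<omega>" if \<omega>: "\<omega> \<in> space N" for i \<omega>
  proof -
    define i' where "i' = r (jf i)"
    have j: "jf i' = jf i" unfolding i'_def by (rule rr)
    have "\<bar>a i \<omega> - a i' \<omega>\<bar> \<le> K * (\<delta> + indicator U \<omega>) + K * (\<delta> + indicator U \<omega>)"
      using emp_pair_bound[where M=M and X=X and Z=Z and jf=jf and Kf=Kf and E=E, OF cov fin j, of n \<omega>, OF sp[OF \<omega>]] Ksum[OF \<omega>, of i] Ksum[OF \<omega>, of i'] unfolding a_def by linarith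
    moreover have "\<bar>e i - e i'\<bar> \<le> K * \<epsilon> + K * \<epsilon>"
      using exp_pair_bound[where M=M and X=X and Z=Z and jf=jf and Kf=Kf and E=E, OF P Xm E cov fin j]
        Ksum2[of i] Ksum2[of i'] unfolding e_def by linarith
    moreover have "\<bar>a i' \<omega> - e i'\<bar> \<le> (\<Sum>j\<in>{1..J}. \<bar>a (r j) \<omega> - e (r j)\<bar>)"
      unfolding i'_def using jf[of i] by (intro member_le_sum) auto
    ultimately show ?thesis unfolding T_def by (simp add: algebra_simps)
  qed
  have am: "(\<lambda>\<omega>. a i \<omega>) \<in> borel_measurable N" for i
    unfolding a_def N_def by (rule emp_meas[OF Xm])
  have Gm: "Gf X M n \<in> borel_measurable N"
  proof -
    have "(\<lambda>\<omega>. SUP i. \<bar>a i \<omega> - e i\<bar>) \<in> borel_measurable N"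
    proof (rule borel_measurable_cSUP)
      show "bdd_above (range (\<lambda>i. \<bar>a i \<omega> - e i\<bar>))" for \<omega>
        unfolding a_def e_def by (rule bdd_gen(2)[OF P Xm])
    qed (use am in auto)
    moreover have "Gf X M n = (\<lambda>\<omega>. SUP i. \<bar>a i \<omega> - e i\<bar>)"
      unfolding Gf_def a_def e_def by (simp add: fun_eq_iff)
    ultimately show ?thesis by simp
  qed
  have ab: "norm (\<bar>a i \<omega> - e i\<bar>) \<le> 1" for i \<omega>
    unfolding a_def e_def by (simp only: real_norm_def abs_abs) (rule bdd_gen(1)[OF P Xm])
  have absi: "integrable N (\<lambda>\<omega>. \<bar>a i \<omega> - e i\<bar>)" for i
    by (rule N.integrable_const_bound[OF AE_I2[OF ab]]) (use am in auto)
  have indi: "integrable N (indicator U :: _ \<Rightarrow> real)"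
    by (rule N.integrable_const_bound[where B=1]) (auto intro: borel_measurable_indicator[OF Um])
  have Ti: "integrable N T" unfolding T_def using absi indi by auto
  have "(\<integral>\<omega>. Gf X M n \<omega> \<partial>N) \<le> (\<integral>\<omega>. T \<omega> \<partial>N)"
  proof (rule Bochner_Integration.integral_mono[OF _ Ti])
    show "integrable N (Gf X M n)"
      by (rule N.integrable_const_bound[where B=1]) (use Gf_bounds(2,3)[OF P Xm] Gm in auto)
    fix \<omega> assume \<omega>: "\<omega> \<in> space N"
    show "Gf X M n \<omega> \<le> T \<omega>"
      unfolding Gf_def using key[OF \<omega>] unfolding a_def e_def by (intro cSUP_least) auto
  qed
  also have "(\<integral>\<omega>. T \<omega> \<partial>N) = (\<Sum>j\<in>{1..J}. (\<integral>\<omega>. \<bar>a (r j) \<omega> - e (r j)\<bar> \<partial>N)) + (2 * real K) * measure N U + (2 * K * \<delta> + 2 * K * \<epsilon>)"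
    unfolding T_def using absi indi Um
    by (simp add: Bochner_Integration.integral_add Bochner_Integration.integral_sum integrable_sum N.prob_space)
  also have "(\<Sum>j\<in>{1..J}. (\<integral>\<omega>. \<bar>a (r j) \<omega> - e (r j)\<bar> \<partial>N)) \<le> (\<Sum>j\<in>{1..J}. \<nu> + 1 / (real n * \<nu>))"
    unfolding a_def e_def N_def by (intro sum_mono lln_bound[OF P Xm n nu])
  also have "measure N U \<le> (\<Sum>k. (2 * measure M (E k) powr \<delta>) ^ n)"
  proof -
    have tk: "measure N (Uk k) \<le> (2 * measure M (E k) powr \<delta>) ^ n" for k
      unfolding Uk_def cnt_def N_def by (rule tail_PiM[OF P E d n])
    have sU: "summable (\<lambda>k. measure N (Uk k))"
      by (rule summable_comparison_test[OF _ summ]) (use tk in auto)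
    have "measure N U \<le> (\<Sum>k. measure N (Uk k))"
      unfolding U_def by (rule N.finite_measure_subadditive_countably) (use Ukm sU in auto)
    also have "\<dots> \<le> (\<Sum>k. (2 * measure M (E k) powr \<delta>) ^ n)"
      by (rule suminf_le[OF tk sU summ])
    finally show ?thesis .
  qed
  finally show ?thesis unfolding N_def by (simp add: algebra_simps) (metis mult_right_mono of_nat_0_le_iff)
qed



lemma pk_bound:
  fixes p C t :: real
  assumes p: "0 < p" "p < 1" and C: "ln (real k + 1) / ln (1 / p) \<le> C" and t: "t \<ge> 2 * C"
  shows "p powr t \<le> 1 / (real k + 1)^2"
proof -
  have lp: "ln (1 / p) = - ln p" using p by (simp add: ln_div)
  have L: "ln (1 / p) > 0" using p by simp
  have "ln (real k + 1) \<le> C * ln (1 / p)" using C L by (simp only: divide_le_eq)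
  moreover have "2 * C * ln (1 / p) \<le> t * ln (1 / p)" using t L by (intro mult_right_mono) auto
  ultimately have le: "2 * ln (real k + 1) \<le> t * ln (1 / p)" by linarith
  have "p powr t = exp (t * ln p)" using p by (simp add: powr_def)
  also have "\<dots> = exp (- (t * ln (1 / p)))" by (simp add: lp)
  also have "\<dots> \<le> exp (- (2 * ln (real k + 1)))"
    using le by (subst exp_le_cancel_iff) linarith
  also have "\<dots> = 1 / (real k + 1)^2"
  proof -
    have "exp (2 * ln (real k + 1)) = (real k + 1)^2"
    proof -
      have "exp (2 * ln (real k + 1)) = exp (ln (real k + 1)) ^ 2"
        using exp_of_nat_mult[of 2 "ln (real k + 1)"] by (simp only: of_nat_numeral)
      also have "exp (ln (real k + 1)) = real k + 1" by (rule exp_ln) linarith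
      finally show ?thesis .
    qed
    then show ?thesis by (simp only: exp_minus inverse_eq_divide)
  qed
  finally show ?thesis .
qed


lemma term_bound:
  fixes p \<epsilon> \<delta> B :: real
  assumes p0: "0 \<le> p" and pe: "p \<le> \<epsilon>" and e4: "\<epsilon> powr (\<delta> / 2) \<le> 1 / 4" and d: "\<delta> > 0" and n: "n > 0"
    and B: "p > 0 \<Longrightarrow> p powr (\<delta> * n / 2) \<le> B" and B0: "B \<ge> 0"
  shows "(2 * p powr \<delta>) ^ n \<le> (1 / 2) ^ n * B"
proof (cases "p = 0")
  case True then show ?thesis using n B0 by (simp add: power_0_left)
next
  case False
  then have pp: "p > 0" using p0 by auto
  have "p powr (\<delta> / 2) \<le> \<epsilon> powr (\<delta> / 2)" using pp pe d by (intro powr_mono2) auto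
  then have q: "p powr (\<delta> / 2) \<le> 1 / 4" using e4 by linarith
  have "p powr \<delta> = p powr (\<delta> / 2) * p powr (\<delta> / 2)" by (simp add: powr_add[symmetric])
  moreover have "p powr (\<delta> / 2) * p powr (\<delta> / 2) \<le> (1 / 4) * p powr (\<delta> / 2)"
    using q by (intro mult_right_mono) auto
  ultimately have "2 * p powr \<delta> \<le> (1 / 2) * p powr (\<delta> / 2)" by linarith
  then have "(2 * p powr \<delta>) ^ n \<le> ((1 / 2) * p powr (\<delta> / 2)) ^ n"
    by (intro power_mono) auto
  also have "\<dots> = (1 / 2) ^ n * p powr (\<delta> * n / 2)"
  proof -
    have "(p powr (\<delta>/2)) ^ n = (p powr (\<delta>/2)) powr (real n)" by (rule powr_realpow[symmetric]) (use pp in simp)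
    also have "\<dots> = p powr (\<delta> * n / 2)" by (simp add: powr_powr)
    finally show ?thesis by (simp only: power_mult_distrib)
  qed
  also have "\<dots> \<le> (1 / 2) ^ n * B" using B[OF pp] by (intro mult_left_mono) auto
  finally show ?thesis .
qed



lemma summable_inv_sq: "summable (\<lambda>k::nat. 1 / (real k + 1)^2)"
proof -
  have "summable (\<lambda>k::nat. inverse (real (Suc k) ^ 2))"
    using summable_Suc_iff[where f="\<lambda>k::nat. inverse (real k ^ 2)"] inverse_power_summable[of 2] by auto
  then show ?thesis by (simp add: inverse_eq_divide add.commute)
qed



lemma lim1: "(\<nu>::real) > 0 \<Longrightarrow> (\<lambda>n. c / (real n * \<nu>)) \<longlonglongrightarrow> 0"
proof -
  assume nu: "\<nu> > 0"
  have "(\<lambda>n. (c / \<nu>) * inverse (real n)) \<longlonglongrightarrow> 0"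
    by (rule tendsto_mult_right_zero[OF lim_inverse_n])
  moreover have "(\<lambda>n. (c / \<nu>) * inverse (real n)) = (\<lambda>n. c / (real n * \<nu>))"
    by (simp add: fun_eq_iff divide_inverse mult.commute mult.left_commute)
  ultimately show ?thesis by simp
qed

lemma lim2: "(\<lambda>n. c * (1 / 2 :: real) ^ n) \<longlonglongrightarrow> 0"
  by (rule tendsto_mult_right_zero, rule LIMSEQ_power_zero) simp



theorem corollary19:
  fixes M :: "'a measure" and X :: "'a \<Rightarrow> nat \<Rightarrow> bool" and \<mu> :: "(nat \<Rightarrow> bool) measure"
  assumes "prob_space M"
    and "X \<in> M \<rightarrow>\<^sub>M seq_space"
    and "\<mu> = distr M seq_space X"
    and "xi_totally_bounded M X"
    and "\<exists>K::nat. K \<ge> 1 \<and> (\<forall>\<epsilon>::real. \<epsilon> > 0 \<longrightarrow>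
           (\<exists>(E :: nat \<Rightarrow> 'a set) (J :: nat) (Z :: nat \<Rightarrow> 'a \<Rightarrow> real).
              (\<forall>k. E k \<in> sets M) \<and>
              (\<forall>j\<in>{1..J}. Z j \<in> borel_measurable M) \<and>
              (\<forall>k. measure M (E k) \<le> \<epsilon>) \<and>
              (SUP k. log_ratio k (measure M (E k))) < \<infinity> \<and>
              (\<forall>i. \<exists>j\<in>{1..J}. \<exists>\<K>. finite \<K> \<and> card \<K> \<le> K \<and>
                 {\<omega> \<in> space M. of_bool (X \<omega> i) \<noteq> Z j \<omega>} \<subseteq> (\<Union>k\<in>\<K>. E k))))"
  shows "(\<lambda>n. Delta n \<mu>) \<longlonglongrightarrow> 0"
proof -
  interpret prob_space M by fact
  have P: "prob_space M" by fact
  have Xm: "X \<in> M \<rightarrow>\<^sub>M seq_space" by fact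
  from assms(5) obtain K :: nat where K1: "K \<ge> 1" and HK: "\<And>\<epsilon>::real. \<epsilon> > 0 \<Longrightarrow>
           (\<exists>(E :: nat \<Rightarrow> 'a set) (J :: nat) (Z :: nat \<Rightarrow> 'a \<Rightarrow> real).
              (\<forall>k. E k \<in> sets M) \<and>
              (\<forall>j\<in>{1..J}. Z j \<in> borel_measurable M) \<and>
              (\<forall>k. measure M (E k) \<le> \<epsilon>) \<and>
              (SUP k. log_ratio k (measure M (E k))) < \<infinity> \<and>
              (\<forall>i. \<exists>j\<in>{1..J}. \<exists>\<K>. finite \<K> \<and> card \<K> \<le> K \<and>
                 {\<omega> \<in> space M. of_bool (X \<omega> i) \<noteq> Z j \<omega>} \<subseteq> (\<Union>k\<in>\<K>. E k)))"
    by blast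
  have Dnn: "0 \<le> Delta n \<mu>" for n
    unfolding assms(3) transfer[OF P Xm]
    by (rule Bochner_Integration.integral_nonneg) (rule Gf_bounds(2)[OF P Xm])
  show ?thesis
  proof (rule LIMSEQ_I)
    fix \<eta> :: real assume \<eta>: "0 < \<eta>"
    have Kp: "real K > 0" using K1 by simp
    define \<delta> where "\<delta> = \<eta> / (10 * K)"
    have d: "\<delta> > 0" unfolding \<delta>_def using \<eta> Kp by simp
    define \<epsilon> where "\<epsilon> = min (\<eta> / (10 * K)) ((1 / 4) powr (2 / \<delta>))"
    have e0: "\<epsilon> > 0" unfolding \<epsilon>_def using \<eta> Kp by simp
    have e1: "\<epsilon> \<le> \<eta> / (10 * K)" unfolding \<epsilon>_def by simp
    have e4: "\<epsilon> powr (\<delta> / 2) \<le> 1 / 4"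
    proof -
      have "\<epsilon> powr (\<delta> / 2) \<le> ((1 / 4) powr (2 / \<delta>)) powr (\<delta> / 2)"
        using e0 d unfolding \<epsilon>_def by (intro powr_mono2) auto
      also have "\<dots> = 1 / 4" using d by (simp add: powr_powr)
      finally show ?thesis .
    qed
    have elt1: "\<epsilon> < 1"
    proof (rule ccontr)
      assume "\<not> \<epsilon> < 1"
      then have "1 \<le> \<epsilon> powr (\<delta> / 2)" using d by (intro ge_one_powr_ge_zero) auto
      then show False using e4 by simp
    qed
    obtain E and J :: nat and Z :: "nat \<Rightarrow> 'a \<Rightarrow> real" where EE: "(\<forall>k. E k \<in> sets M) \<and>
              (\<forall>j\<in>{1..J}. Z j \<in> borel_measurable M) \<and>
              (\<forall>k. measure M (E k) \<le> \<epsilon>) \<and>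
              (SUP k. log_ratio k (measure M (E k))) < \<infinity> \<and>
              (\<forall>i. \<exists>j\<in>{1..J}. \<exists>\<K>. finite \<K> \<and> card \<K> \<le> K \<and>
                 {\<omega> \<in> space M. of_bool (X \<omega> i) \<noteq> Z j \<omega>} \<subseteq> (\<Union>k\<in>\<K>. E k))"
      using HK[OF e0] by (elim exE) (erule that)
    have E: "\<And>k. E k \<in> sets M" and Eeps: "\<And>k. measure M (E k) \<le> \<epsilon>"
      and Esup: "(SUP k. log_ratio k (measure M (E k))) < \<infinity>"
      and cov0: "\<forall>i. \<exists>j\<in>{1..J}. \<exists>\<K>. finite \<K> \<and> card \<K> \<le> K \<and>
                 {\<omega> \<in> space M. of_bool (X \<omega> i) \<noteq> Z j \<omega>} \<subseteq> (\<Union>k\<in>\<K>. E k)"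
      using EE by auto
    define Q where "Q = (\<lambda>i j Kf. finite Kf \<and> card Kf \<le> K \<and>
                 {\<omega> \<in> space M. of_bool (X \<omega> i) \<noteq> Z j \<omega>} \<subseteq> (\<Union>k\<in>Kf. E k))"
    have "\<forall>i. \<exists>j\<in>{1..J}. \<exists>Kf. Q i j Kf" using cov0 unfolding Q_def by simp
    then have "\<forall>i. \<exists>jK. fst jK \<in> {1..J} \<and> Q i (fst jK) (snd jK)" by fastforce
    then have "\<exists>f. \<forall>i. fst (f i) \<in> {1..J} \<and> Q i (fst (f i)) (snd (f i))" by (rule choice)
    then obtain f where f: "\<And>i. fst (f i) \<in> {1..J} \<and> Q i (fst (f i)) (snd (f i))" by blast
    define jf where "jf = (\<lambda>i. fst (f i))"
    define Kf where "Kf = (\<lambda>i. snd (f i))"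
    have jf: "\<And>i. jf i \<in> {1..J}" and fin: "\<And>i. finite (Kf i)" and Kc: "\<And>i. card (Kf i) \<le> K"
      and cov: "\<And>i. {w \<in> space M. of_bool (X w i) \<noteq> Z (jf i) w} \<subseteq> (\<Union>k\<in>Kf i. E k)"
      using f unfolding jf_def Kf_def Q_def by auto
    have Jp: "real J > 0" using jf[of 0] by simp
    obtain C where C: "\<And>k. log_ratio k (measure M (E k)) \<le> ereal C"
    proof (cases "(SUP k. log_ratio k (measure M (E k)))" rule: ereal_cases)
      case (real s)
      then show ?thesis using that[of s] by (metis SUP_upper UNIV_I)
    next
      case PInf then show ?thesis using Esup by simp
    next
      case MInf
      then show ?thesis using that[of 0] by (metis SUP_upper UNIV_I MInfty_neq_ereal(2) ereal_infty_less_eq2(2) order_trans order_refl ereal_less_eq(2))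
    qed
    define C' where "C' = max C 1"
    have pk: "measure M (E k) powr t \<le> 1 / (real k + 1)^2" if "measure M (E k) > 0" "t \<ge> 2 * C'" for k t
    proof -
      have p1: "measure M (E k) < 1" using Eeps[of k] elt1 by linarith
      have "log_ratio k (measure M (E k)) = ereal (ln (real k + 1) / ln (1 / measure M (E k)))"
        using that(1) p1 unfolding log_ratio_def by auto
      then have "ln (real k + 1) / ln (1 / measure M (E k)) \<le> C'"
        using C[of k] unfolding C'_def by auto
      then show ?thesis by (rule pk_bound[OF that(1) p1 _ that(2)])
    qed
    define \<nu> where "\<nu> = \<eta> / (10 * J)"
    have nu: "\<nu> > 0" unfolding \<nu>_def using \<eta> Jp by simp
    define Zs where "Zs = (\<Sum>k. 1 / (real k + 1)^2)"
    have Zs0: "Zs \<ge> 0" unfolding Zs_def by (intro suminf_nonneg summable_inv_sq) auto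
    have bound: "Delta n \<mu> \<le> J * (\<nu> + 1 / (real n * \<nu>)) + 2 * K * \<delta> + 2 * K * ((1 / 2) ^ n * Zs) + 2 * K * \<epsilon>"
      if n: "n > 0" and nC: "\<delta> * n / 2 \<ge> 2 * C'" for n
    proof -
      have tb: "(2 * measure M (E k) powr \<delta>) ^ n \<le> (1 / 2) ^ n * (1 / (real k + 1)^2)" for k
        by (rule term_bound[OF measure_nonneg Eeps e4 d n]) (use pk[OF _ nC] in auto)
      have s2: "summable (\<lambda>k. (1 / 2) ^ n * (1 / (real k + 1)^2))"
        by (intro summable_mult summable_inv_sq)
      have summ: "summable (\<lambda>k. (2 * measure M (E k) powr \<delta>) ^ n)"
        by (rule summable_comparison_test[OF _ s2]) (use tb in auto)
      have "(\<Sum>k. (2 * measure M (E k) powr \<delta>) ^ n) \<le> (\<Sum>k. (1 / 2) ^ n * (1 / (real k + 1)^2))"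
        by (rule suminf_le[OF tb summ s2])
      also have "\<dots> = (1 / 2) ^ n * Zs" unfolding Zs_def by (rule suminf_mult[OF summable_inv_sq])
      finally have sb: "(\<Sum>k. (2 * measure M (E k) powr \<delta>) ^ n) \<le> (1 / 2) ^ n * Zs" .
      have "Delta n \<mu> = (\<integral>\<omega>. Gf X M n \<omega> \<partial>PiM {..<n} (\<lambda>_. M))"
        unfolding assms(3) by (rule transfer[OF P Xm])
      also have "\<dots> \<le> J * (\<nu> + 1 / (real n * \<nu>)) + 2 * K * \<delta> + 2 * K * (\<Sum>k. (2 * measure M (E k) powr \<delta>) ^ n) + 2 * K * \<epsilon>"
        by (rule main_bound[OF P Xm E Eeps jf fin Kc cov n d nu summ])
      also have "\<dots> \<le> J * (\<nu> + 1 / (real n * \<nu>)) + 2 * K * \<delta> + 2 * K * ((1 / 2) ^ n * Zs) + 2 * K * \<epsilon>"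
        using sb by (intro add_mono order_refl mult_left_mono) auto
      finally show ?thesis .
    qed
    obtain n1 :: nat where n1: "4 * C' / \<delta> \<le> real n1" using real_arch_simple by blast
    have ev1: "eventually (\<lambda>n. n > 0 \<and> \<delta> * n / 2 \<ge> 2 * C') sequentially"
    proof (rule eventually_sequentiallyI[of "n1 + 1"])
      fix n assume "n1 + 1 \<le> n"
      then have "real n1 \<le> real n" "n > 0" by auto
      then have "4 * C' / \<delta> \<le> real n" using n1 by linarith
      then have "4 * C' \<le> \<delta> * real n" using d by (simp add: divide_le_eq mult.commute)
      then show "n > 0 \<and> \<delta> * n / 2 \<ge> 2 * C'" using \<open>n > 0\<close> by simp
    qed
    have ev2: "eventually (\<lambda>n. J / (real n * \<nu>) < \<eta> / 10) sequentially"
      using lim1[OF nu, of J] \<eta> by (intro order_tendstoD(2)) auto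
    have ev3: "eventually (\<lambda>n. (2 * K * Zs) * (1 / 2) ^ n < \<eta> / 10) sequentially"
      using lim2[of "2 * K * Zs"] \<eta> by (intro order_tendstoD(2)) auto
    have "eventually (\<lambda>n. norm (Delta n \<mu> - 0) < \<eta>) sequentially"
      using ev1 ev2 ev3
    proof eventually_elim
      case (elim n)
      then have b: "Delta n \<mu> \<le> J * (\<nu> + 1 / (real n * \<nu>)) + 2 * K * \<delta> + 2 * K * ((1 / 2) ^ n * Zs) + 2 * K * \<epsilon>"
        using bound by auto
      have A1: "real J * (\<nu> + 1 / (real n * \<nu>)) = \<eta> / 10 + real J / (real n * \<nu>)"
        unfolding \<nu>_def using Jp by (simp add: distrib_left)
      have A2: "real (2 * K) * \<delta> = \<eta> / 5" unfolding \<delta>_def using Kp by simp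
      have A3: "real (2 * K) * \<epsilon> \<le> \<eta> / 5" using e1 Kp by (simp add: le_divide_eq mult.commute)
      have A4: "real (2 * K) * ((1 / 2) ^ n * Zs) = (real (2 * K) * Zs) * (1 / 2) ^ n" by simp
      have "Delta n \<mu> < \<eta>" using b A1 A2 A3 A4 elim(2) elim(3) \<eta> by linarith
      then show ?case using Dnn[of n] by simp
    qed
    then show "\<exists>no. \<forall>n\<ge>no. norm (Delta n \<mu> - 0) < \<eta>"
      by (simp add: eventually_sequentially)
  qed
qed


end
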